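(* The semantics $\mathit{tfcf2}$ and $\mathit{tfstg2}$ satisfy the weak reinstatement criterion: for every argumentation framework $\mathcal{F}$ and every $S\in\mathit{tfcf2}(\mathcal{F})$ or $S\in\mathit{tfstg2}(\mathcal{F})$, $S$ contains the grounded extension of $\mathcal{F}$.
   Context: An argumentation framework (AF) is $\mathcal{F}=(A_{\mathcal{F}},R_{\mathcal{F}})$ with $R_{\mathcal{F}}\subseteq A_{\mathcal{F}}\times A_{\mathcal{F}}$ (possibly infinite); $a\rightarrow b$ means $(a,b)\in R_{\mathcal{F}}$. $S$ defends $a$ if every attacker of $a$ is attacked by some element of $S$; $f_{\mathcal{F}}(S)=\{x: S\text{ defends }x\}$. The grounded extension is the least fixed point of the monotone map $f_{\mathcal{F}}$. $\mathcal{F}|_B=(A_{\mathcal{F}}\cap B,R_{\mathcal{F}}\cap(B\times B))$. Conflict-free: no $a,b\in S$ with $a\rightarrow b$; naive: $\subseteq$-maximal conflict-free; $S^\oplus=S\cup\{x:\exists y\in S,\ y\rightarrow x\}$; stage: conflict-free $S$ with no conflict-free $T$ such that $S^\oplus\subsetneq T^\oplus$. $\mathrm{SCC}(a)$: set of $b$ with directed attack paths (possibly of length 0) from $a$ to $b$ and back. $D_S(X)=\{b\in X:\exists a\in S\setminus X,\ a\rightarrow b\}$. $C^0_S(a)=\mathrm{SCC}(a)$; $C^{\alpha+1}_S(a)$ = component of $a$ in $\mathcal{F}|_{C^\alpha_S(a)\setminus D_S(C^\alpha_S(a))}$ (empty if $a$ not there); for limit $\lambda$, component of $a$ in $\mathcal{F}|_{\bigcap_{\alpha<\lambda}C^\alpha_S(a)}$;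 $\alpha_S(a)$ = least $\alpha$ with $a\notin C^\alpha_S(a)$ or $C^{\alpha+1}_S(a)=C^\alpha_S(a)$. $S\in\mathit{tfcf2}(\mathcal{F})$ (resp. $\mathit{tfstg2}(\mathcal{F})$) iff $S$ is conflict-free and for each $a\in A_{\mathcal{F}}$, $a\notin C^{\alpha_S(a)}_S(a)$ or $S\cap C^{\alpha_S(a)}_S(a)$ is a naive (resp. stage) extension of $\mathcal{F}|_{C^{\alpha_S(a)}_S(a)}$. *)

theory Defs
  imports Main
begin

definition is_AF :: "'a set \<Rightarrow> ('a \<times> 'a) set \<Rightarrow> bool" where
  "is_AF A R \<longleftrightarrow> R \<subseteq> A \<times> A"

definition defends :: "('a \<times> 'a) set \<Rightarrow> 'a set \<Rightarrow> 'a \<Rightarrow> bool" where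
  "defends R S x \<longleftrightarrow> (\<forall>b. (b, x) \<in> R \<longrightarrow> (\<exists>c\<in>S. (c, b) \<in> R))"

definition char_fun :: "'a set \<Rightarrow> ('a \<times> 'a) set \<Rightarrow> 'a set \<Rightarrow> 'a set" where
  "char_fun A R S = {x \<in> A. defends R S x}"

definition grounded :: "'a set \<Rightarrow> ('a \<times> 'a) set \<Rightarrow> 'a set" where
  "grounded A R = lfp (char_fun A R)"

definition restr_rel :: "('a \<times> 'a) set \<Rightarrow> 'a set \<Rightarrow> ('a \<times> 'a) set" where
  "restr_rel R B = R \<inter> (B \<times> B)"

definition conflict_free :: "('a \<times> 'a) set \<Rightarrow> 'a set \<Rightarrow> bool" where
  "conflict_free R S \<longleftrightarrow> (\<forall>a\<in>S. \<forall>b\<in>S. (a, b) \<notin> R)"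

definition naive :: "'a set \<Rightarrow> ('a \<times> 'a) set \<Rightarrow> 'a set \<Rightarrow> bool" where
  "naive A R S \<longleftrightarrow> S \<subseteq> A \<and> conflict_free R S \<and>
     (\<forall>T. S \<subset> T \<and> T \<subseteq> A \<longrightarrow> \<not> conflict_free R T)"

definition range_plus :: "('a \<times> 'a) set \<Rightarrow> 'a set \<Rightarrow> 'a set" where
  "range_plus R S = S \<union> {x. \<exists>y\<in>S. (y, x) \<in> R}"

definition stage :: "'a set \<Rightarrow> ('a \<times> 'a) set \<Rightarrow> 'a set \<Rightarrow> bool" where
  "stage A R S \<longleftrightarrow> S \<subseteq> A \<and> conflict_free R S \<and>
     \<not> (\<exists>T. T \<subseteq> A \<and> conflict_free R T \<and> range_plus R S \<subset> range_plus R T)"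

text \<open>The (strongly connected) component of a in F|_X (empty if a is not an argument of F|_X).
  For X = UNIV this is SCC(a) in F.\<close>
definition comp :: "'a set \<Rightarrow> ('a \<times> 'a) set \<Rightarrow> 'a set \<Rightarrow> 'a \<Rightarrow> 'a set" where
  "comp A R X a = (if a \<in> A \<inter> X then
      {b. (a, b) \<in> (restr_rel R X)\<^sup>* \<and> (b, a) \<in> (restr_rel R X)\<^sup>*} else {})"

definition D_set :: "('a \<times> 'a) set \<Rightarrow> 'a set \<Rightarrow> 'a set \<Rightarrow> 'a set" where
  "D_set R S X = {b \<in> X. \<exists>a\<in>S - X. (a, b) \<in> R}"

definition C_step :: "'a set \<Rightarrow> ('a \<times> 'a) set \<Rightarrow> 'a set \<Rightarrow> 'a \<Rightarrow> 'a set \<Rightarrow> 'a set" where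
  "C_step A R S a X = comp A R (X - D_set R S X) a"

text \<open>The transfinite sequence C^alpha_S(a), alpha an ordinal, represented as the set of
  its members: the least set closed under the successor step and under taking the component
  of a in the intersection of any chain of members (limit step; the empty chain gives
  C^0 = SCC(a)).\<close>
inductive_set C_stages :: "'a set \<Rightarrow> ('a \<times> 'a) set \<Rightarrow> 'a set \<Rightarrow> 'a \<Rightarrow> 'a set set"
  for A R S a where
  base: "comp A R UNIV a \<in> C_stages A R S a"
| succ: "X \<in> C_stages A R S a \<Longrightarrow> C_step A R S a X \<in> C_stages A R S a"
| lim: "\<forall>X\<in>M. X \<in> C_stages A R S a \<Longrightarrow> Complete_Partial_Order.chain (\<subseteq>) M
          \<Longrightarrow> comp A R (\<Inter>M) a \<in> C_stages A R S a"

text \<open>C^{alpha_S(a)}_S(a): the first member of the sequence that is fixed by the successor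
  step (if a is not in a member, the step yields the empty set, which is fixed).\<close>
definition C_final :: "'a set \<Rightarrow> ('a \<times> 'a) set \<Rightarrow> 'a set \<Rightarrow> 'a \<Rightarrow> 'a set" where
  "C_final A R S a = (THE X. X \<in> C_stages A R S a \<and> C_step A R S a X = X)"

definition tfcf2 :: "'a set \<Rightarrow> ('a \<times> 'a) set \<Rightarrow> 'a set set" where
  "tfcf2 A R = {S. S \<subseteq> A \<and> conflict_free R S \<and>
     (\<forall>a\<in>A. a \<notin> C_final A R S a \<or>
        naive (A \<inter> C_final A R S a) (restr_rel R (C_final A R S a)) (S \<inter> C_final A R S a))}"

definition tfstg2 :: "'a set \<Rightarrow> ('a \<times> 'a) set \<Rightarrow> 'a set set" where
  "tfstg2 A R = {S. S \<subseteq> A \<and> conflict_free R S \<and>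
     (\<forall>a\<in>A. a \<notin> C_final A R S a \<or>
        stage (A \<inter> C_final A R S a) (restr_rel R (C_final A R S a)) (S \<inter> C_final A R S a))}"

end

theory Submission
  imports Defs
begin

lemma comp_sub:
  assumes AF: "is_AF A R"
  shows "comp A R W a \<subseteq> W \<inter> A"
proof
  fix b assume b: "b \<in> comp A R W a"
  then have a: "a \<in> A \<inter> W" and ba: "(b, a) \<in> (restr_rel R W)\<^sup>*"
    by (auto simp: comp_def split: if_splits)
  from ba show "b \<in> W \<inter> A"
  proof (cases rule: converse_rtranclE)
    case base then show ?thesis using a by simp
  next
    case (step y) then show ?thesis using AF by (auto simp: restr_rel_def is_AF_def)
  qed
qed

lemma comp_mono:
  assumes "W \<subseteq> V"
  shows "comp A R W a \<subseteq> comp A R V a"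
proof -
  have "restr_rel R W \<subseteq> restr_rel R V" using assms by (auto simp: restr_rel_def)
  then have "(restr_rel R W)\<^sup>* \<subseteq> (restr_rel R V)\<^sup>*" by (rule rtrancl_mono)
  then show ?thesis using assms by (auto simp: comp_def)
qed

lemma comp_paths:
  assumes b: "b \<in> comp A R W a"
  shows "(a, b) \<in> (restr_rel R (comp A R W a))\<^sup>* \<and> (b, a) \<in> (restr_rel R (comp A R W a))\<^sup>*"
proof -
  let ?r = "restr_rel R W"
  let ?Y = "comp A R W a"
  have aW: "a \<in> A \<inter> W" using b by (auto simp: comp_def split: if_splits)
  have Yeq: "?Y = {b. (a, b) \<in> ?r\<^sup>* \<and> (b, a) \<in> ?r\<^sup>*}" using aW by (simp add: comp_def)
  have ab: "(a, b) \<in> ?r\<^sup>*" and ba: "(b, a) \<in> ?r\<^sup>*" using b Yeq by auto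
  have 1: "(b, a) \<in> ?r\<^sup>* \<longrightarrow> (a, b) \<in> (restr_rel R ?Y)\<^sup>*" if "(a, b) \<in> ?r\<^sup>*" for b
    using that
  proof (induction rule: rtrancl_induct)
    case base then show ?case by simp
  next
    case (step u v)
    show ?case
    proof
      assume va: "(v, a) \<in> ?r\<^sup>*"
      have ua: "(u, a) \<in> ?r\<^sup>*" using step(2) va by (rule converse_rtrancl_into_rtrancl)
      have av: "(a, v) \<in> ?r\<^sup>*" using step(1,2) by (rule rtrancl_into_rtrancl)
      have uY: "u \<in> ?Y" using Yeq step(1) ua by blast
      have vY: "v \<in> ?Y" using Yeq av va by blast
      have "(u, v) \<in> restr_rel R ?Y" using step(2) uY vY by (auto simp: restr_rel_def)
      moreover have "(a, u) \<in> (restr_rel R ?Y)\<^sup>*" using step(3) ua by blast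
      ultimately show "(a, v) \<in> (restr_rel R ?Y)\<^sup>*" by (rule rtrancl_into_rtrancl[rotated])
    qed
  qed
  have 2: "(a, b) \<in> ?r\<^sup>* \<longrightarrow> (b, a) \<in> (restr_rel R ?Y)\<^sup>*" if "(b, a) \<in> ?r\<^sup>*" for b
    using that
  proof (induction rule: converse_rtrancl_induct)
    case base then show ?case by simp
  next
    case (step u v)
    show ?case
    proof
      assume au: "(a, u) \<in> ?r\<^sup>*"
      have av: "(a, v) \<in> ?r\<^sup>*" using au step(1) by (rule rtrancl_into_rtrancl)
      have ua: "(u, a) \<in> ?r\<^sup>*" using step(1,2) by (rule converse_rtrancl_into_rtrancl)
      have uY: "u \<in> ?Y" using Yeq au ua by blast
      have vY: "v \<in> ?Y" using Yeq step(2) av by blast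
      have "(u, v) \<in> restr_rel R ?Y" using step(1) uY vY by (auto simp: restr_rel_def)
      moreover have "(v, a) \<in> (restr_rel R ?Y)\<^sup>*" using step(3) av by blast
      ultimately show "(u, a) \<in> (restr_rel R ?Y)\<^sup>*" by (rule converse_rtrancl_into_rtrancl)
    qed
  qed
  show ?thesis using 1[OF ab] 2[OF ba] ab ba by blast
qed

lemma comp_absorb:
  assumes AF: "is_AF A R" and c: "c \<in> comp A R W a" and sub: "comp A R W a \<subseteq> V"
  shows "comp A R W a \<subseteq> comp A R V c"
proof
  let ?Y = "comp A R W a"
  fix b assume b: "b \<in> ?Y"
  have cA: "c \<in> A \<inter> V" using comp_sub[OF AF] c sub by blast
  have rr: "(restr_rel R ?Y)\<^sup>* \<subseteq> (restr_rel R V)\<^sup>*"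
    by (rule rtrancl_mono) (use sub in \<open>unfold restr_rel_def, blast\<close>)
  have p1: "(c, a) \<in> (restr_rel R ?Y)\<^sup>*" and p2: "(a, c) \<in> (restr_rel R ?Y)\<^sup>*"
    using comp_paths[OF c] by blast+
  have p3: "(a, b) \<in> (restr_rel R ?Y)\<^sup>*" and p4: "(b, a) \<in> (restr_rel R ?Y)\<^sup>*"
    using comp_paths[OF b] by blast+
  have q1: "(c, b) \<in> (restr_rel R ?Y)\<^sup>*" using p1 p3 by (rule rtrancl_trans)
  have q2: "(b, c) \<in> (restr_rel R ?Y)\<^sup>*" using p4 p2 by (rule rtrancl_trans)
  have "(c, b) \<in> (restr_rel R V)\<^sup>*" using rr q1 by (rule subsetD)
  moreover have "(b, c) \<in> (restr_rel R V)\<^sup>*" using rr q2 by (rule subsetD)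
  ultimately
  show "b \<in> comp A R V c" using cA by (simp add: comp_def)
qed

lemma C_step_sub:
  assumes AF: "is_AF A R"
  shows "C_step A R S a X \<subseteq> X"
  using comp_sub[OF AF] unfolding C_step_def by blast

lemma D_mono:
  assumes "Y \<subseteq> Z"
  shows "Y - D_set R S Y \<subseteq> Z - D_set R S Z"
  using assms by (auto simp: D_set_def)

lemma member_comp:
  assumes "X \<in> C_stages A R S a"
  shows "\<exists>W. X = comp A R W a"
  using assms by cases (auto simp: C_step_def)

lemma member_ne:
  assumes "X \<in> C_stages A R S a" "X \<noteq> {}"
  shows "a \<in> X"
proof -
  obtain W where "X = comp A R W a" using member_comp[OF assms(1)] by blast
  then show ?thesis using assms(2) by (auto simp: comp_def split: if_splits)
qed

lemma fixed_below:
  assumes AF: "is_AF A R"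
    and Y: "Y \<in> C_stages A R S a" and Yfx: "C_step A R S a Y = Y" and c: "c \<in> Y"
    and Z: "Z \<in> C_stages A R S c"
  shows "Y \<subseteq> Z"
proof -
  obtain W where YW: "Y = comp A R W a" using member_comp[OF Y] by blast
  have YD: "Y \<subseteq> Y - D_set R S Y"
    using Yfx comp_sub[OF AF, of "Y - D_set R S Y" a] unfolding C_step_def by auto
  have cY: "c \<in> comp A R W a" using c YW by simp
  from Z show ?thesis
  proof induction
    case base
    show ?case using comp_absorb[OF AF cY, of UNIV] YW by simp
  next
    case (succ X)
    have "Y \<subseteq> X - D_set R S X" using YD D_mono[OF succ.IH, of R S] by blast
    then show ?case using comp_absorb[OF AF cY, of "X - D_set R S X"] YW
      unfolding C_step_def by simp
  next
    case (lim M)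
    have "Y \<subseteq> \<Inter>M" using lim(1) by blast
    then show ?case using comp_absorb[OF AF cY, of "\<Inter>M"] YW by simp
  qed
qed

lemma fixed_exists:
  assumes AF: "is_AF A R"
  shows "\<exists>Y. Y \<in> C_stages A R S a \<and> C_step A R S a Y = Y"
proof -
  let ?T = "C_stages A R S a"
  obtain M where M: "subset.maxchain ?T M" using subset.Hausdorff by blast
  have Mc: "subset.chain ?T M" using M by (simp add: subset.maxchain_def)
  have MT: "M \<subseteq> ?T" using Mc by (simp add: subset.chain_def)
  have chM: "Complete_Partial_Order.chain (\<subseteq>) M"
    using Mc unfolding subset.chain_def Complete_Partial_Order.chain_def by auto
  have ins: "X \<in> M" if XT: "X \<in> ?T" and XM: "\<forall>Z\<in>M. X \<subseteq> Z" for X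
  proof (rule ccontr)
    assume "X \<notin> M"
    have "subset.chain ?T (insert X M)"
      using Mc XT XM unfolding subset.chain_def by auto
    moreover have "M \<subset> insert X M" using \<open>X \<notin> M\<close> by auto
    ultimately show False using M by (auto simp: subset.maxchain_def)
  qed
  let ?L = "comp A R (\<Inter>M) a"
  have LT: "?L \<in> ?T" using MT chM by (intro C_stages.lim) auto
  have Lsub: "\<forall>Z\<in>M. ?L \<subseteq> Z" using comp_sub[OF AF, of "\<Inter>M" a] by blast
  have LM: "?L \<in> M" using ins[OF LT Lsub] .
  have fT: "C_step A R S a ?L \<in> ?T" using LT by (rule C_stages.succ)
  have fsub: "C_step A R S a ?L \<subseteq> ?L" by (rule C_step_sub[OF AF])
  have "C_step A R S a ?L \<in> M" using ins[OF fT] fsub Lsub by blast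
  then have "?L \<subseteq> C_step A R S a ?L" using Lsub by blast
  then show ?thesis using fsub LT by blast
qed

lemma C_final_props:
  assumes AF: "is_AF A R"
  shows "C_final A R S a \<in> C_stages A R S a \<and> C_step A R S a (C_final A R S a) = C_final A R S a"
proof -
  have ex1: "\<exists>!Y. Y \<in> C_stages A R S a \<and> C_step A R S a Y = Y"
  proof -
    obtain Y where Y: "Y \<in> C_stages A R S a" "C_step A R S a Y = Y" using fixed_exists[OF AF] by blast
    have "Y' = Y" if Y': "Y' \<in> C_stages A R S a" "C_step A R S a Y' = Y'" for Y'
    proof -
      have 1: "Y' \<subseteq> Y"
      proof (cases "Y' = {}")
        case False
        then show ?thesis using fixed_below[OF AF Y' member_ne[OF Y'(1) False] Y(1)] by blast
      qed simp
      have 2: "Y \<subseteq> Y'"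
      proof (cases "Y = {}")
        case False
        then show ?thesis using fixed_below[OF AF Y member_ne[OF Y(1) False] Y'(1)] by blast
      qed simp
      show ?thesis using 1 2 by blast
    qed
    then show ?thesis using Y by blast
  qed
  show ?thesis unfolding C_final_def by (rule theI'[OF ex1])
qed

theorem theorem12:
  fixes A :: "'a set" and R :: "('a \<times> 'a) set" and S :: "'a set"
  assumes "is_AF A R"
    and "S \<in> tfcf2 A R \<or> S \<in> tfstg2 A R"
  shows "grounded A R \<subseteq> S"
proof -
  note AF = assms(1)
  have SA: "S \<subseteq> A" and cf: "conflict_free R S" using assms(2) by (auto simp: tfcf2_def tfstg2_def)
  have mono: "mono (char_fun A R)"
    unfolding mono_def char_fun_def defends_def by blast
  let ?P = "\<lambda>x. x \<in> S \<and> C_final A R S x = {x}"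
  have "?P x" if xG: "x \<in> grounded A R" for x
    using xG unfolding grounded_def
  proof (rule lfp_induct_set[OF _ mono])
    fix x assume H1: "x \<in> char_fun A R (lfp (char_fun A R) \<inter> {x. ?P x})"
    let ?G = "lfp (char_fun A R) \<inter> {x. ?P x}"
    have xA: "x \<in> A" and def: "defends R ?G x" using H1 by (auto simp: char_fun_def)
    have noatt: "(s, x) \<notin> R" if "s \<in> S" for s
      using def that cf unfolding defends_def conflict_free_def by blast
    have noself: "(x, x) \<notin> R"
      using def noatt unfolding defends_def by blast
    have inall: "x \<in> X" if "X \<in> C_stages A R S x" for X
      using that
    proof induction
      case base then show ?case using xA by (simp add: comp_def)
    next
      case (succ X)
      have "x \<notin> D_set R S X" using noatt by (auto simp: D_set_def)
      then show ?case using succ xA by (simp add: C_step_def comp_def)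
    next
      case (lim M)
      then show ?case using xA by (simp add: comp_def)
    qed
    let ?C = "C_final A R S x"
    have Cst: "?C \<in> C_stages A R S x" and Cfix: "C_step A R S x ?C = ?C"
      using C_final_props[OF AF] by blast+
    have xC: "x \<in> ?C" using inall[OF Cst] .
    have CD: "?C \<subseteq> ?C - D_set R S ?C"
      using Cfix comp_sub[OF AF, of "?C - D_set R S ?C" x] unfolding C_step_def by auto
    obtain W where CW: "?C = comp A R W x" using member_comp[OF Cst] by blast
    have Csing: "?C \<subseteq> {x}"
    proof
      fix b assume bC: "b \<in> ?C"
      show "b \<in> {x}"
      proof (rule ccontr)
        assume "b \<notin> {x}"
        then have bx: "b \<noteq> x" by simp
        have "(b, x) \<in> (restr_rel R ?C)\<^sup>*" using comp_paths[of b A R W x] bC CW by simp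
        then obtain y where y: "(y, x) \<in> restr_rel R ?C"
          using bx by (auto elim: rtranclE)
        then have yC: "y \<in> ?C" and yx: "(y, x) \<in> R" by (auto simp: restr_rel_def)
        obtain c where cG: "c \<in> ?G" and cy: "(c, y) \<in> R" using def yx unfolding defends_def by blast
        have cS: "c \<in> S" and cfin: "C_final A R S c = {c}" using cG by auto
        have cC: "c \<in> ?C"
        proof (rule ccontr)
          assume "c \<notin> ?C"
          then have "y \<in> D_set R S ?C" using yC cS cy by (auto simp: D_set_def)
          then show False using CD yC by blast
        qed
        have "?C \<subseteq> C_final A R S c"
          using fixed_below[OF AF Cst Cfix cC] C_final_props[OF AF, of S c] by blast
        then have "?C \<subseteq> {c}" using cfin by simp
        then have "x = c" "y = c" using xC yC by auto
        then show False using yx noself by simp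
      qed
    qed
    have Ceq: "?C = {x}" using Csing xC by blast
    have xS: "x \<in> S"
    proof (rule ccontr)
      assume nS: "x \<notin> S"
      have e: "S \<inter> {x} = {}" using nS by auto
      have cfx: "conflict_free (restr_rel R {x}) {x}"
        using noself by (auto simp: conflict_free_def restr_rel_def)
      from assms(2) show False
      proof
        assume "S \<in> tfcf2 A R"
        then have "naive (A \<inter> {x}) (restr_rel R {x}) (S \<inter> {x})"
          using xA xC Ceq unfolding tfcf2_def by force
        then show False using e cfx xA unfolding naive_def by auto
      next
        assume "S \<in> tfstg2 A R"
        then have "stage (A \<inter> {x}) (restr_rel R {x}) (S \<inter> {x})"
          using xA xC Ceq unfolding tfstg2_def by force
        then show False using e cfx xA unfolding stage_def range_plus_def by auto
      qed
    qed
    show "?P x" using xS Ceq by simp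
  qed
  then show ?thesis by blast
qed

end
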